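(* Let $d:\Sigma^n\to\Sigma$ be a depth assignment and let $s_0,\dots,s_m$ be a path in the valid subgraph of $B_n$ (i.e. each $(s_i,s_{i+1})$ is a valid arc). Then \[\sum_{i=0}^{m-1} e_{s_i[0]} \equiv P\left(H(s_0)+e_{d_{s_0}}\right) - P\left(H(s_m)+e_{d_{s_m}}\right) \mod K.\]
   Context: Let $k\ge 1$ be an integer, $\Sigma=\{0,1,\dots,k-1\}$ with arithmetic on symbols taken modulo $k$, and $n\ge 1$. For $s\in\Sigma^n$ write $s=s[0]\cdots s[n-1]$. The de Bruijn graph $B_n$ has node set $\Sigma^n$ and an arc $(s,t)$ iff $s[1]\cdots s[n-1]=t[0]\cdots t[n-2]$. A depth assignment is any function $d:\Sigma^n\to\Sigma$, written $s\mapsto d_s$. An arc $(s,t)$ of $B_n$ is valid (with respect to $d$) if, with $b=s[0]$ and $c=t[n-1]$, either ($b+1=c$ and $d_s=d_t$) or ($b+1=d_t$ and $c=d_s$); the valid arcs form the valid subgraph. The histogram $H(s):\Sigma\to\mathbb{Z}$ counts occurrences of each symbol in $s$; $e_b$ is the indicator function of $b\in\Sigma$; $K$ is the constant function $1$ on $\Sigma$; $P(H)(i)=\sum_{j=0}^i H(j)$ is the partial sum of $H:\Sigma\to\mathbb{Z}$; $F\equiv G\mod K$ means $F-G$ is an integer multiple of $K$. *)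

theory Defs
  imports Main
begin

text \<open>Alphabet \<Sigma> = {0..<k} (naturals), strings of length n are lists.
Functions \<Sigma> \<rightarrow> Z are modelled as nat \<Rightarrow> int, only values on {0..<k} matter.\<close>

definition strings :: "nat \<Rightarrow> nat \<Rightarrow> nat list set" where
  "strings k n = {s. length s = n \<and> (\<forall>x\<in>set s. x < k)}"

definition db_arc :: "nat \<Rightarrow> nat \<Rightarrow> nat list \<Rightarrow> nat list \<Rightarrow> bool" where
  "db_arc k n s t \<longleftrightarrow> s \<in> strings k n \<and> t \<in> strings k n \<and>
     drop 1 s = take (n - 1) t"

definition valid_arc :: "nat \<Rightarrow> nat \<Rightarrow> (nat list \<Rightarrow> nat) \<Rightarrow> nat list \<Rightarrow> nat list \<Rightarrow> bool" where
  "valid_arc k n d s t \<longleftrightarrow> db_arc k n s t \<and>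
     (let b = s ! 0; c = t ! (n - 1) in
       ((b + 1) mod k = c \<and> d s = d t) \<or> ((b + 1) mod k = d t \<and> c = d s))"

definition hist :: "nat list \<Rightarrow> nat \<Rightarrow> int" where
  "hist s j = int (count_list s j)"

definition ind :: "nat \<Rightarrow> nat \<Rightarrow> int" where
  "ind b j = (if j = b then 1 else 0)"

definition psum :: "(nat \<Rightarrow> int) \<Rightarrow> nat \<Rightarrow> int" where
  "psum H i = (\<Sum>j\<le>i. H j)"

definition cong_K :: "nat \<Rightarrow> (nat \<Rightarrow> int) \<Rightarrow> (nat \<Rightarrow> int) \<Rightarrow> bool" where
  "cong_K k F G \<longleftrightarrow> (\<exists>c::int. \<forall>i<k. F i - G i = c)"

end

theory Submission
  imports Defs
begin

lemma psum_ind: "psum (ind b) j = (if b \<le> j then 1 else 0)"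
  unfolding psum_def ind_def by (simp add: sum.delta)

lemma psum_add: "psum (\<lambda>l. f l + g l) j = psum f j + psum g j"
  unfolding psum_def by (simp add: sum.distrib)

lemma psum_diff: "psum (\<lambda>l. f l - g l) j = psum f j - psum g j"
  unfolding psum_def by (simp add: sum_subtractf)

lemma psum_cong: "(\<And>l. f l = g l) \<Longrightarrow> psum f j = psum g j"
  by (simp add: psum_def)

lemma hist_step:
  assumes "s \<in> strings k n" "t \<in> strings k n" "n \<ge> 1" "drop 1 s = take (n-1) t"
  shows "hist t l = hist s l - ind (s!0) l + ind (t!(n-1)) l"
proof -
  have ls: "length s = n" and lt: "length t = n" using assms by (auto simp: strings_def)
  obtain b s' where s: "s = b # s'" using ls assms(3) by (cases s) auto
  have t: "t = take (n-1) t @ [t!(n-1)]"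
  proof -
    have "take (Suc (n-1)) t = take (n-1) t @ [t!(n-1)]"
      using lt assms(3) by (intro take_Suc_conv_app_nth) simp
    then show ?thesis using lt assms(3) by simp
  qed
  have "count_list t l = count_list (take (n-1) t) l + count_list [t!(n-1)] l"
    by (subst t) (rule count_list_append)
  then have "count_list t l = count_list s' l + (if t!(n-1) = l then 1 else 0)"
    using assms(4) s by simp
  moreover have "count_list s l = count_list s' l + (if s!0 = l then 1 else 0)"
    using s by simp
  ultimately show ?thesis unfolding hist_def ind_def by auto
qed

lemma one_step:
  assumes "k \<ge> 1" "n \<ge> 1" "valid_arc k n d s t"
  shows "\<exists>c::int. \<forall>j<k. ind (s!0) j -
      (psum (\<lambda>l. hist s l + ind (d s) l) j - psum (\<lambda>l. hist t l + ind (d t) l) j) = c"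
proof -
  let ?b = "s!0"
  have arc: "s \<in> strings k n" "t \<in> strings k n" "drop 1 s = take (n-1) t"
    using assms(3) by (auto simp: valid_arc_def db_arc_def)
  have bk: "?b < k" using arc(1) assms(2) by (auto simp: strings_def)
  have H: "\<And>l. hist t l = hist s l - ind ?b l + ind (t!(n-1)) l"
    using hist_step[OF arc(1,2) assms(2) arc(3)] .
  have G: "\<And>l. hist t l + ind (d t) l = (hist s l + ind (d s) l) - ind ?b l + ind ((?b+1) mod k) l"
    using assms(3) H unfolding valid_arc_def Let_def by auto
  have P: "\<And>j. psum (\<lambda>l. hist t l + ind (d t) l) j
     = psum (\<lambda>l. hist s l + ind (d s) l) j - psum (ind ?b) j + psum (ind ((?b+1) mod k)) j"
    by (subst psum_cong[OF G]) (simp add: psum_add psum_diff)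
  show ?thesis
  proof (cases "?b + 1 = k")
    case True
    then show ?thesis
      by (intro exI[of _ 1]) (auto simp only: P psum_ind, auto simp: ind_def)
  next
    case False
    then have "(?b+1) mod k = ?b + 1" using bk by simp
    then show ?thesis
      by (intro exI[of _ 0]) (auto simp only: P psum_ind, auto simp: ind_def)
  qed
qed

theorem lemma4:
  fixes k n m :: nat and d :: "nat list \<Rightarrow> nat" and s :: "nat \<Rightarrow> nat list"
  assumes "k \<ge> 1" and "n \<ge> 1"
    and "\<forall>x\<in>strings k n. d x < k"
    and "\<forall>i\<le>m. s i \<in> strings k n"
    and "\<forall>i<m. valid_arc k n d (s i) (s (Suc i))"
  shows "cong_K k (\<lambda>j. \<Sum>i<m. ind (s i ! 0) j)
           (\<lambda>j. psum (\<lambda>l. hist (s 0) l + ind (d (s 0)) l) j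
              - psum (\<lambda>l. hist (s m) l + ind (d (s m)) l) j)"
  using assms(5)
proof (induction m)
  case 0
  then show ?case by (auto simp: cong_K_def)
next
  case (Suc m)
  then obtain c where c: "\<forall>j<k. (\<Sum>i<m. ind (s i ! 0) j) -
     (psum (\<lambda>l. hist (s 0) l + ind (d (s 0)) l) j
              - psum (\<lambda>l. hist (s m) l + ind (d (s m)) l) j) = c"
    by (auto simp: cong_K_def)
  obtain c' where c': "\<forall>j<k. ind (s m!0) j -
      (psum (\<lambda>l. hist (s m) l + ind (d (s m)) l) j
        - psum (\<lambda>l. hist (s (Suc m)) l + ind (d (s (Suc m))) l) j) = c'"
    using one_step[OF assms(1,2)] Suc.prems by blast
  show ?case unfolding cong_K_def
  proof (intro exI[of _ "c + c'"] allI impI)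
    fix j assume "j < k"
    show "(\<Sum>i<Suc m. ind (s i ! 0) j) -
       (psum (\<lambda>l. hist (s 0) l + ind (d (s 0)) l) j
        - psum (\<lambda>l. hist (s (Suc m)) l + ind (d (s (Suc m))) l) j) = c + c'"
    proof -
      have "(\<Sum>i<Suc m. ind (s i ! 0) j) = (\<Sum>i<m. ind (s i ! 0) j) + ind (s m ! 0) j" by simp
      then show ?thesis using spec[OF c, of j] spec[OF c', of j] \<open>j < k\<close> by simp
    qed
  qed
qed

end
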